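(* Let $T_{i,j,k}$ be the solution of the $T$-system with the $2\times2$ periodic initial data $t_{i,j}$ ($t_{i,j}=a$ if $i,j$ even, $b$ if $i,j$ odd, $c$ if $i$ even and $j$ odd, $d$ if $i$ odd and $j$ even, with $a,b,c,d>0$). For $k\ge1$ and $i+j+k\equiv 0\pmod 2$ let $L_{i,j,k}=\frac{T_{i+1,j,k}T_{i-1,j,k}}{T_{i,j,k+1}T_{i,j,k-1}}$ and $R_{i,j,k}=1-L_{i,j,k}$. Then with $e_1=(2,0,0)$, $e_2=(0,2,0)$, $e_3=(1,1,2)$, $$L_{(i,j,k)+me_1+ne_2+pe_3}=L_{i,j,k},\qquad R_{(i,j,k)+me_1+ne_2+pe_3}=R_{i,j,k}$$ for all $m,n\in\mathbb{Z}$, $p\ge0$.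
   Context: The $T$-system is $T_{i,j,k+1}T_{i,j,k-1}=T_{i+1,j,k}T_{i-1,j,k}+T_{i,j+1,k}T_{i,j-1,k}$ for $k\ge1$, on points $(i,j,k)\in\mathbb{Z}^2\times\mathbb{Z}_{\ge0}$ with $i+j+k\equiv 1\pmod 2$, with initial data $T_{i,j,(i+j+1\bmod 2)}=t_{i,j}$. One has $R_{i,j,k}=\frac{T_{i,j+1,k}T_{i,j-1,k}}{T_{i,j,k+1}T_{i,j,k-1}}$ by the $T$-system. *)

theory Defs
  imports Complex_Main
begin

text \<open>Only values at lattice points
  (i,j,k) with i+j+k odd are meaningful; the recursion on such points only
  involves lattice points. Initial data: T(i,j,0) = t(i,j) for i+j odd and
  T(i,j,1) = t(i,j) for i+j even, i.e. T(i,j,(i+j+1) mod 2) = t(i,j).\<close>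
fun Tsys :: "(int \<Rightarrow> int \<Rightarrow> real) \<Rightarrow> int \<Rightarrow> int \<Rightarrow> nat \<Rightarrow> real" where
  "Tsys t i j 0 = t i j"
| "Tsys t i j (Suc 0) = t i j"
| "Tsys t i j (Suc (Suc k)) =
     (Tsys t (i+1) j (Suc k) * Tsys t (i-1) j (Suc k)
      + Tsys t i (j+1) (Suc k) * Tsys t i (j-1) (Suc k)) / Tsys t i j k"

definition tper :: "real \<Rightarrow> real \<Rightarrow> real \<Rightarrow> real \<Rightarrow> int \<Rightarrow> int \<Rightarrow> real" where
  "tper a b c d i j =
     (if even i \<and> even j then a
      else if odd i \<and> odd j then b
      else if even i \<and> odd j then c
      else d)"

definition Lsys :: "(int \<Rightarrow> int \<Rightarrow> real) \<Rightarrow> int \<Rightarrow> int \<Rightarrow> nat \<Rightarrow> real" where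
  "Lsys t i j k = (Tsys t (i+1) j k * Tsys t (i-1) j k)
                   / (Tsys t i j (k+1) * Tsys t i j (k-1))"

definition Rsys :: "(int \<Rightarrow> int \<Rightarrow> real) \<Rightarrow> int \<Rightarrow> int \<Rightarrow> nat \<Rightarrow> real" where
  "Rsys t i j k = 1 - Lsys t i j k"

end

theory Submission
  imports Defs
begin

lemma Tpos:
  "(\<forall>i j. t i j > 0) \<Longrightarrow> Tsys t i j k > 0"
  proof (induction t i j k rule: Tsys.induct)
  case (3 t i j k)
  have "0 < (Tsys t (i+1) j (Suc k) * Tsys t (i-1) j (Suc k)
      + Tsys t i (j+1) (Suc k) * Tsys t i (j-1) (Suc k)) / Tsys t i j k"
    using 3 by (intro divide_pos_pos add_pos_pos mult_pos_pos) auto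
  then show ?case by (simp only: Tsys.simps)
qed auto

lemma Tper:
  shows "(\<forall>i i' j j'. i mod 2 = i' mod 2 \<longrightarrow> j mod 2 = j' mod 2 \<longrightarrow> t i j = t i' j') \<Longrightarrow> i mod 2 = i' mod 2 \<Longrightarrow> j mod 2 = j' mod 2 \<Longrightarrow> Tsys t i j k = Tsys t i' j' k"
proof (induction t i j k arbitrary: i' j' rule: Tsys.induct)
  case (1 t i j)
  have "t i j = t i' j'" using 1 by blast
  then show ?case by (simp only: Tsys.simps)
next
  case (2 t i j)
  have "t i j = t i' j'" using 2 by blast
  then show ?case by (simp only: Tsys.simps)
next
  case (3 t i j k)
  have a1: "(i+1) mod 2 = (i'+1) mod 2" using 3(7) by presburger
  have a2: "(i-1) mod 2 = (i'-1) mod 2" using 3(7) by presburger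
  have a3: "(j+1) mod 2 = (j'+1) mod 2" using 3(8) by presburger
  have a4: "(j-1) mod 2 = (j'-1) mod 2" using 3(8) by presburger
  have e1: "Tsys t (i+1) j (Suc k) = Tsys t (i'+1) j' (Suc k)" by (rule 3(1)[OF 3(6) a1 3(8)])
  have e2: "Tsys t (i-1) j (Suc k) = Tsys t (i'-1) j' (Suc k)" by (rule 3(2)[OF 3(6) a2 3(8)])
  have e3: "Tsys t i (j+1) (Suc k) = Tsys t i' (j'+1) (Suc k)" by (rule 3(3)[OF 3(6) 3(7) a3])
  have e4: "Tsys t i (j-1) (Suc k) = Tsys t i' (j'-1) (Suc k)" by (rule 3(4)[OF 3(6) 3(7) a4])
  have e5: "Tsys t i j k = Tsys t i' j' k" by (rule 3(5)[OF 3(6) 3(7) 3(8)])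
  show ?case unfolding Tsys.simps(3) e1 e2 e3 e4 e5 by (rule refl)
qed

locale tsetup =
  fixes t :: "int \<Rightarrow> int \<Rightarrow> real"
  assumes pos: "\<And>i j. t i j > 0"
    and per: "\<And>i i' j j'. i mod 2 = i' mod 2 \<Longrightarrow> j mod 2 = j' mod 2 \<Longrightarrow> t i j = t i' j'"
begin

abbreviation T where "T \<equiv> Tsys t"

lemma P: "i mod 2 = i' mod 2 \<Longrightarrow> j mod 2 = j' mod 2 \<Longrightarrow> T i j k = T i' j' k"
  using Tper[of t] per by blast

lemma Tp: "T i j k > 0" using Tpos[of t] pos by blast

lemma rec: "T i j (k+2) * T i j k = T (i+1) j (k+1) ^ 2 + T i (j+1) (k+1) ^ 2"
proof -
  have e1: "T (i-1) j (k+1) = T (i+1) j (k+1)" by (rule P) presburger+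
  have e2: "T i (j-1) (k+1) = T i (j+1) (k+1)" by (rule P) presburger+
  have "T i j (Suc (Suc k)) * T i j k =
     T (i+1) j (Suc k) * T (i-1) j (Suc k) + T i (j+1) (Suc k) * T i (j-1) (Suc k)"
    using Tp[of i j k] by simp
  then show ?thesis using e1 e2 by (simp del: Tsys.simps add: power2_eq_square)
qed

lemma key: "T (i+1) j (k+2) * T (i+1) j k = T i (j+1) (k+2) * T i (j+1) k"
proof -
  have "T (i+1) j (k+2) * T (i+1) j k = T (i+2) j (k+1) ^ 2 + T (i+1) (j+1) (k+1) ^ 2"
    using rec[of "i+1" j k] by (simp add: add.assoc)
  also have "T (i+2) j (k+1) = T i j (k+1)" by (rule P) presburger+
  also have "T i j (k+1) ^ 2 + T (i+1) (j+1) (k+1) ^ 2 = T (i+1) (j+1) (k+1) ^ 2 + T i (j+2) (k+1) ^ 2"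
  proof -
    have "T i (j+2) (k+1) = T i j (k+1)" by (rule P) presburger+
    then show ?thesis by simp
  qed
  also have "\<dots> = T i (j+1) (k+2) * T i (j+1) k"
    using rec[of i "j+1" k] by (simp add: add.assoc)
  finally show ?thesis .
qed

lemma Lform:
  assumes "k \<ge> 1"
  shows "Lsys t i j k = T (i+1) j k ^ 2 / (T (i+1) j k ^ 2 + T i (j+1) k ^ 2)"
proof -
  obtain k' where k: "k = k' + 1" using assms by (metis add.commute le_add_diff_inverse)
  have e1: "T (i-1) j k = T (i+1) j k" by (rule P) presburger+
  have "T i j (k+1) * T i j (k-1) = T (i+1) j k ^ 2 + T i (j+1) k ^ 2"
    using rec[of i j k'] k by simp
  then show ?thesis unfolding Lsys_def using e1 by (simp add: power2_eq_square)
qed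

lemma shift1:
  assumes "k \<ge> 1"
  shows "Lsys t (i+1) (j+1) (k+2) = Lsys t i j k"
proof -
  define X where "X = T (i+1) j k"
  define Y where "Y = T i (j+1) k"
  define X' where "X' = T i (j+1) (k+2)"
  define Y' where "Y' = T (i+1) j (k+2)"
  have X'': "T (i+1+1) (j+1) (k+2) = X'" unfolding X'_def by (rule P) presburger+
  have Y'': "T (i+1) (j+1+1) (k+2) = Y'" unfolding Y'_def by (rule P) presburger+
  have L1: "Lsys t (i+1) (j+1) (k+2) = X'^2 / (X'^2 + Y'^2)"
    using Lform[of "k+2" "i+1" "j+1"] X'' Y'' assms by simp
  have L2: "Lsys t i j k = X^2/(X^2+Y^2)" using Lform[OF assms] X_def Y_def by simp
  have kk: "Y' * X = X' * Y" using key[of i j k] unfolding X_def Y_def X'_def Y'_def .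
  have pos: "X > 0" "Y > 0" "X' > 0" "Y' > 0" unfolding X_def Y_def X'_def Y'_def by (rule Tp)+
  have sq: "X'^2 * Y^2 = X^2 * Y'^2"
    using kk by (metis mult.commute power_mult_distrib)
  have d1: "X'^2 + Y'^2 > 0" "X^2+Y^2 > 0" using pos by (simp_all add: add_pos_pos)
  have "X'^2 / (X'^2 + Y'^2) = X^2/(X^2+Y^2)"
    using d1 sq pos by (simp add: divide_eq_eq field_simps)
  then show ?thesis using L1 L2 by simp
qed

lemma shiftp:
  assumes "k \<ge> 1"
  shows "Lsys t (i + int p) (j + int p) (k + 2*p) = Lsys t i j k"
proof (induction p)
  case 0 then show ?case by simp
next
  case (Suc p)
  have "Lsys t (i + int (Suc p)) (j + int (Suc p)) (k + 2*Suc p)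
      = Lsys t (i + int p + 1) (j + int p + 1) (k + 2*p + 2)"
    by (simp add: algebra_simps)
  also have "\<dots> = Lsys t (i + int p) (j + int p) (k + 2*p)"
    by (rule shift1) (use assms in simp)
  finally show ?case using Suc.IH by (rule trans)
qed

lemma shiftmn:
  "Lsys t (i + 2*m) (j + 2*n) k = Lsys t i j k"
proof -
  have a: "T (i+2*m+1) (j+2*n) k = T (i+1) j k" by (rule P) presburger+
  have b: "T (i+2*m-1) (j+2*n) k = T (i-1) j k" by (rule P) presburger+
  have c: "T (i+2*m) (j+2*n) k' = T i j k'" for k' by (rule P) presburger+
  show ?thesis unfolding Lsys_def a b c by (rule refl)
qed

end

lemma ev2: "i mod 2 = i' mod 2 \<Longrightarrow> even (i::int) = even i'"
  by (simp add: even_iff_mod_2_eq_zero)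
lemma tp1: "a>0 \<Longrightarrow> b>0 \<Longrightarrow> c>0 \<Longrightarrow> d>0 \<Longrightarrow> tper a b c d i j > 0"
  by (simp add: tper_def)
lemma tp2: "i mod 2 = i' mod 2 \<Longrightarrow> j mod 2 = j' mod 2 \<Longrightarrow> tper a b c d i j = tper a b c d i' j'"
proof -
  assume h: "i mod 2 = i' mod 2" "j mod 2 = j' mod 2"
  have e: "even i = even i'" "even j = even j'" using ev2 h by blast+
  show ?thesis unfolding tper_def e by (rule refl)
qed

theorem mainTheorem4:
  fixes a b c d :: real and i j m n :: int and k p :: nat
  assumes "a > 0" "b > 0" "c > 0" "d > 0"
    and "k \<ge> 1" and "even (i + j + int k)"
  shows "Lsys (tper a b c d) (i + 2*m + int p) (j + 2*n + int p) (k + 2*p)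
           = Lsys (tper a b c d) i j k
       \<and> Rsys (tper a b c d) (i + 2*m + int p) (j + 2*n + int p) (k + 2*p)
           = Rsys (tper a b c d) i j k"
proof -
  interpret tsetup "tper a b c d"
  proof (rule tsetup.intro)
    show "\<And>i j. tper a b c d i j > 0" by (rule tp1[OF assms(1-4)])
    show "\<And>i i' j j'. i mod 2 = i' mod 2 \<Longrightarrow> j mod 2 = j' mod 2 \<Longrightarrow> tper a b c d i j = tper a b c d i' j'"
      by (rule tp2)
  qed
  have "Lsys (tper a b c d) (i + 2*m + int p) (j + 2*n + int p) (k + 2*p)
      = Lsys (tper a b c d) (i + int p + 2*m) (j + int p + 2*n) (k + 2*p)"
    by (simp only: ac_simps)
  also have "\<dots> = Lsys (tper a b c d) (i + int p) (j + int p) (k + 2*p)" by (rule shiftmn)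
  also have "\<dots> = Lsys (tper a b c d) i j k" by (rule shiftp[OF assms(5)])
  finally have Leq: "Lsys (tper a b c d) (i + 2*m + int p) (j + 2*n + int p) (k + 2*p) = Lsys (tper a b c d) i j k" .
  then show ?thesis unfolding Rsys_def by (simp only: refl simp_thms)
qed

end
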